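(* Let $(G,\precsim)$ be a compatible quasi-ordered abelian group and $G^v=G\setminus G^o$. Then $G^v$ is a final segment of $G$. Moreover, for any $g\in G^v$ and $h\in G$ we have $cl(g+h)\leq\max(cl(g),cl(h))$, and if $h\precnsim g$ then $g\sim g+h$.
   Context: A compatible quasi-ordered abelian group is an abelian group $G$ with a total quasi-order $\precsim$ (reflexive, transitive, any two elements comparable) such that, writing $a\sim b$ for $a\precsim b\wedge b\precsim a$: $(Q_1)$ $x\sim0\Rightarrow x=0$; $(Q_2)$ $x\precsim y\wedge y\not\sim z\Rightarrow x+z\precsim y+z$, for all $x,y,z$. $cl(g)$ is the $\sim$-class of $g$; the classes are totally ordered by $cl(a)\le cl(b)\Leftrightarrow a\precsim b$. $a\precnsim b$ means $a\precsim b$ and $a\not\sim b$. An element $g$ is o-type if $cl(g)=\{g\}$ and $g$ is not of order $2$; $G^o$ is the set of o-type elements. A set $S$ is a final segment if $s\in S$, $s\precsim a$ imply $a\in S$. *)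

theory Defs
  imports Main
begin

definition qequiv :: "('a \<Rightarrow> 'a \<Rightarrow> bool) \<Rightarrow> 'a \<Rightarrow> 'a \<Rightarrow> bool" where
  "qequiv le a b \<longleftrightarrow> le a b \<and> le b a"

definition cqoag :: "('a::ab_group_add \<Rightarrow> 'a \<Rightarrow> bool) \<Rightarrow> bool" where
  "cqoag le \<longleftrightarrow>
     (\<forall>x. le x x) \<and>
     (\<forall>x y z. le x y \<longrightarrow> le y z \<longrightarrow> le x z) \<and>
     (\<forall>x y. le x y \<or> le y x) \<and>
     (\<forall>x. qequiv le x 0 \<longrightarrow> x = 0) \<and>
     (\<forall>x y z. le x y \<and> \<not> qequiv le y z \<longrightarrow> le (x + z) (y + z))"

definition qcl :: "('a \<Rightarrow> 'a \<Rightarrow> bool) \<Rightarrow> 'a \<Rightarrow> 'a set" where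
  "qcl le g = {x. qequiv le x g}"

definition otype :: "('a::ab_group_add \<Rightarrow> 'a \<Rightarrow> bool) \<Rightarrow> 'a set" where
  "otype le = {g. qcl le g = {g} \<and> \<not> (g \<noteq> 0 \<and> g + g = 0)}"

definition final_segment :: "('a \<Rightarrow> 'a \<Rightarrow> bool) \<Rightarrow> 'a set \<Rightarrow> bool" where
  "final_segment le S \<longleftrightarrow> (\<forall>s a. s \<in> S \<and> le s a \<longrightarrow> a \<in> S)"

end

theory Submission
  imports Defs
begin

lemma cq_refl: "cqoag le \<Longrightarrow> le x x" by (simp add: cqoag_def)
lemma cq_trans: "cqoag le \<Longrightarrow> le x y \<Longrightarrow> le y z \<Longrightarrow> le x z" unfolding cqoag_def by blast
lemma cq_total: "cqoag le \<Longrightarrow> le x y \<or> le y x" unfolding cqoag_def by blast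
lemma cq_Q1: "cqoag le \<Longrightarrow> le x 0 \<Longrightarrow> le 0 x \<Longrightarrow> x = 0" unfolding cqoag_def qequiv_def by blast
lemma cq_Q2: "cqoag le \<Longrightarrow> le x y \<Longrightarrow> \<not> (le y z \<and> le z y) \<Longrightarrow> le (x+z) (y+z)"
  unfolding cqoag_def qequiv_def by blast

lemma notin_otype:
  assumes C: "cqoag le"
  shows "g \<notin> otype le \<longleftrightarrow> ((\<exists>y. le y g \<and> le g y \<and> y \<noteq> g) \<or> (g \<noteq> 0 \<and> g + g = 0))"
  using cq_refl[OF C] unfolding otype_def qcl_def qequiv_def by auto

lemma negS:
  assumes C: "cqoag le" and a: "le x 0" "x \<noteq> 0" shows "le 0 (-x)"
proof -
  have "\<not> (le 0 (-x) \<and> le (-x) 0)" using cq_Q1[OF C, of "-x"] a by auto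
  from cq_Q2[OF C a(1) this] show ?thesis by simp
qed

lemma negsingle:
  assumes C: "cqoag le" and a: "le x 0" "x \<noteq> 0" "le y x" "le x y" shows "y = x"
proof -
  have n: "le 0 (-x)" using negS[OF C a(1,2)] .
  have nx: "\<not> le (-x) x"
  proof
    assume "le (-x) x"
    then have "le (-x) 0" using cq_trans[OF C _ a(1)] by blast
    then have "-x = 0" using cq_Q1[OF C] n by blast
    then show False using a by simp
  qed
  have "le (y + -x) (x + -x)" using cq_Q2[OF C a(3)] nx by blast
  then have 1: "le (y - x) 0" by simp
  have "\<not> (le y (-x) \<and> le (-x) y)" using nx cq_trans[OF C _ a(3)] by blast
  then have "le (x + -x) (y + -x)" using cq_Q2[OF C a(4)] by blast
  then have 2: "le 0 (y - x)" by simp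
  from cq_Q1[OF C 1 2] show ?thesis by simp
qed

lemma v_pos:
  assumes C: "cqoag le" and v: "g \<notin> otype le" shows "le 0 g" "g \<noteq> 0"
proof -
  show g0: "g \<noteq> 0"
  proof
    assume "g = 0"
    with v notin_otype[OF C] obtain y where "le y 0" "le 0 y" "y \<noteq> 0" by auto
    then show False using cq_Q1[OF C] by blast
  qed
  show "le 0 g"
  proof (rule ccontr)
    assume "\<not> le 0 g"
    then have l: "le g 0" using cq_total[OF C] by blast
    have 1: "\<And>y. le y g \<Longrightarrow> le g y \<Longrightarrow> y = g" using negsingle[OF C l g0] by blast
    have 2: "g + g \<noteq> 0"
    proof
      assume "g + g = 0"
      then have "-g = g" by (metis minus_unique)
      then show False using negS[OF C l g0] \<open>\<not> le 0 g\<close> by simp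
    qed
    show False using v 1 2 notin_otype[OF C] by blast
  qed
qed

lemma v_neg:
  assumes C: "cqoag le" and v: "g \<notin> otype le" shows "le g (-g) \<and> le (-g) g"
proof -
  from v notin_otype[OF C] consider (a) y where "le y g" "le g y" "y \<noteq> g" | (b) "g + g = 0" by blast
  then show ?thesis
  proof cases
    case b
    then have "-g = g" by (metis minus_unique)
    then show ?thesis using cq_refl[OF C] by simp
  next
    case a
    show ?thesis
    proof (rule ccontr)
      assume n: "\<not> (le g (-g) \<and> le (-g) g)"
      have "le (y + -g) (g + -g)" using cq_Q2[OF C a(1) n] .
      then have 1: "le (y - g) 0" by simp
      have "\<not> (le y (-g) \<and> le (-g) y)" using n cq_trans[OF C] a by blast
      then have "le (g + -g) (y + -g)" using cq_Q2[OF C a(2)] by blast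
      then have 2: "le 0 (y - g)" by simp
      from cq_Q1[OF C 1 2] a(3) show False by simp
    qed
  qed
qed

lemma final:
  assumes C: "cqoag le" and v: "g \<notin> otype le" and ga: "le g a" shows "a \<notin> otype le"
proof
  assume ao: "a \<in> otype le"
  then have A: "\<And>y. le y a \<Longrightarrow> le a y \<Longrightarrow> y = a" and A2: "\<not> (a \<noteq> 0 \<and> a + a = 0)"
    unfolding otype_def qcl_def qequiv_def by auto
  have g0: "le 0 g" "g \<noteq> 0" using v_pos[OF C v] by auto
  have nag: "\<not> le a g" using A ga v ao by blast
  have a0: "a \<noteq> 0" using ga g0 cq_Q1[OF C] by blast
  have ana: "\<not> (le a (-a) \<and> le (-a) a)"
  proof
    assume "le a (-a) \<and> le (-a) a"
    then have "-a = a" using A by blast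
    then have "a + a = 0" by (metis add.right_inverse)
    then show False using A2 a0 by blast
  qed
  from v notin_otype[OF C] consider (a) y where "le y g" "le g y" "y \<noteq> g" | (b) "g + g = 0" by blast
  then show False
  proof cases
    case b
    have "le (0 + a) (g + a)" using cq_Q2[OF C g0(1)] nag by blast
    then have 1: "le a (a + g)" by (simp add: add.commute)
    have "\<not> (le (a + g) g \<and> le g (a + g))" using 1 nag cq_trans[OF C] by blast
    then have "le (a + g) (a + g + g)" using cq_Q2[OF C 1] by blast
    then have "le (a + g) a" using b by (simp add: add.assoc)
    then have "a + g = a" using A 1 by blast
    then show False using g0 by simp
  next
    case a
    have "le (g + -a) (a + -a)" using cq_Q2[OF C ga ana] .
    then have 1: "le (g - a) 0" by simp
    have 2: "g - a \<noteq> 0" using nag cq_refl[OF C] by auto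
    have "le (0 + -a) (a + -a)" using cq_Q2[OF C _ ana] cq_trans[OF C g0(1) ga] by blast
    then have ma: "le (-a) 0" by simp
    have nga: "\<not> (le g (-a) \<and> le (-a) g)" using ma cq_trans[OF C] g0 cq_Q1[OF C] by blast
    have "\<not> (le y (-a) \<and> le (-a) y)" using nga a cq_trans[OF C] by blast
    then have "le (g + -a) (y + -a)" using cq_Q2[OF C a(2)] by blast
    then have 3: "le (g - a) (y - a)" by simp
    have "le (y + -a) (g + -a)" using cq_Q2[OF C a(1) nga] .
    then have 4: "le (y - a) (g - a)" by simp
    have "y - a = g - a" using negsingle[OF C 1 2 4 3] .
    then show False using a(3) by simp
  qed
qed

lemma part3:
  assumes C: "cqoag le" and v: "g \<notin> otype le" and hg: "le h g" "\<not> le g h"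
  shows "le g (g+h) \<and> le (g+h) g"
proof -
  have g0: "le 0 g" "g \<noteq> 0" using v_pos[OF C v] by auto
  have vg: "le g (-g)" "le (-g) g" using v_neg[OF C v] by auto
  consider "le 0 h" | "le h 0" using cq_total[OF C] by blast
  then show ?thesis
  proof cases
    case 1
    have "le (0 + g) (h + g)" using cq_Q2[OF C 1] hg by blast
    then have kg: "le g (g+h)" by (simp add: add.commute)
    have kv: "g + h \<notin> otype le" using final[OF C v kg] .
    have kn: "le (g+h) (-(g+h))" using v_neg[OF C kv] by blast
    have "le (g+h) g"
    proof (rule ccontr)
      assume nk: "\<not> le (g+h) g"
      consider "le (-h) 0" | "le 0 (-h)" using cq_total[OF C] by blast
      then show False
      proof cases
        case 1
        have "\<not> (le 0 (-g) \<and> le (-g) 0)" using cq_Q1[OF C, of "-g"] g0 by auto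
        then have "le (-h + -g) (0 + -g)" using cq_Q2[OF C 1] by blast
        then have "le (-(g+h)) (-g)" by (simp add: add.commute)
        then have "le (g+h) g" using kn vg cq_trans[OF C] by blast
        then show False using nk by blast
      next
        case 2
        have "\<not> (le (-h) (g+h) \<and> le (g+h) (-h))"
        proof
          assume "le (-h) (g+h) \<and> le (g+h) (-h)"
          then have "le (g+h) (-h)" by blast
          then have hv: "-h \<notin> otype le" using final[OF C kv] by blast
          have "le (-h) h" using v_neg[OF C hv] by simp
          then have "le g h" using kg \<open>le (g+h) (-h)\<close> cq_trans[OF C] by blast
          then show False using hg by blast
        qed
        then have "le (0 + (g+h)) (-h + (g+h))" using cq_Q2[OF C 2] by blast
        then have "le (g+h) g" by simp
        then show False using nk by blast
      qed
    qed
    then show ?thesis using kg by blast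
  next
    case 2
    have "\<not> (le 0 g \<and> le g 0)" using cq_Q1[OF C] g0 by blast
    then have "le (h + g) (0 + g)" using cq_Q2[OF C 2] by blast
    then have kg: "le (g+h) g" by (simp add: add.commute)
    have "le g (g+h)"
    proof (cases "h = 0")
      case True then show ?thesis using cq_refl[OF C] by simp
    next
      case False
      have mh: "le 0 (-h)" using negS[OF C 2 False] .
      have "\<not> (le (-h) (-g) \<and> le (-g) (-h))"
      proof
        assume "le (-h) (-g) \<and> le (-g) (-h)"
        then have "le g (-h)" using vg cq_trans[OF C] by blast
        then have hv: "-h \<notin> otype le" using final[OF C v] by blast
        have "le (-h) h" using v_neg[OF C hv] by simp
        then have "le g h" using \<open>le g (-h)\<close> cq_trans[OF C] by blast
        then show False using hg by blast
      qed
      then have "le (0 + -g) (-h + -g)" using cq_Q2[OF C mh] by blast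
      then have mk: "le (-g) (-(g+h))" by (simp add: add.commute)
      have mgv: "-g \<notin> otype le" using final[OF C v vg(1)] .
      have mkv: "-(g+h) \<notin> otype le" using final[OF C mgv mk] .
      have "le (-(g+h)) (-(-(g+h)))" using v_neg[OF C mkv] by blast
      then have "le (-(g+h)) (g+h)" by (simp only: minus_minus)
      then show ?thesis using vg mk cq_trans[OF C] by blast
    qed
    then show ?thesis using kg by blast
  qed
qed

theorem mainTheorem7:
  fixes le :: "'a::ab_group_add \<Rightarrow> 'a \<Rightarrow> bool"
  assumes "cqoag le"
  shows "final_segment le (UNIV - otype le)
    \<and> (\<forall>g \<in> UNIV - otype le. \<forall>h.
          (le (g + h) g \<or> le (g + h) h)
        \<and> (le h g \<and> \<not> qequiv le h g \<longrightarrow> qequiv le g (g + h)))"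
proof -
  note C = assms
  have fs: "final_segment le (UNIV - otype le)"
    unfolding final_segment_def using final[OF C] by blast
  have rest: "(le (g + h) g \<or> le (g + h) h)
        \<and> (le h g \<and> \<not> qequiv le h g \<longrightarrow> qequiv le g (g + h))" if v: "g \<notin> otype le" for g h
  proof
    show "le h g \<and> \<not> qequiv le h g \<longrightarrow> qequiv le g (g + h)"
      using part3[OF C v] unfolding qequiv_def by blast
    consider "le h g" "\<not> le g h" | "le g h" "\<not> le h g" | "le h g" "le g h"
      using cq_total[OF C] by blast
    then show "le (g + h) g \<or> le (g + h) h"
    proof cases
      case 1 then show ?thesis using part3[OF C v] by blast
    next
      case 2
      have hv: "h \<notin> otype le" using final[OF C v 2(1)] .
      show ?thesis using part3[OF C hv 2(1) 2(2)] 2 by (simp add: add.commute)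
    next
      case 3
      have "le (g+h) g"
      proof (rule ccontr)
        assume nk: "\<not> le (g+h) g"
        then have gk: "le g (g+h)" using cq_total[OF C] by blast
        have kv: "g + h \<notin> otype le" using final[OF C v gk] .
        have hv: "h \<notin> otype le" using final[OF C v 3(2)] .
        have hn: "le (-h) h" "le h (-h)" using v_neg[OF C hv] by auto
        have a1: "le (-h) (g+h)" using hn 3 gk cq_trans[OF C] by meson
        have a2: "\<not> le (g+h) (-h)" using hn 3 nk cq_trans[OF C] by meson
        have "le (g+h) (g + h + -h)" using part3[OF C kv a1 a2] by blast
        then show False using nk by simp
      qed
      then show ?thesis by blast
    qed
  qed
  show ?thesis using fs rest by blast
qed

end
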